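(* Let $p\in(0,1]$, $c_1,c_2\ge0$, $\beta<1$, $\delta_1,\delta_2\in(0,1)$. Define $R=\frac12$, $S=(1-p)\frac12$, and for $i=1,2$: $T_i=p+(1-p)\frac12-c_i$, $Q_i=p^2\frac12\beta+p(1-p)+(1-p)^2\frac12-c_i$. (Grim Trigger) $\frac{R}{1-\delta_i}\ge T_i+\frac{\delta_iQ_i}{1-\delta_i}$ for both $i=1,2$ if and only if \[\delta_1\ge\frac{p-2c_1}{(1-\beta)p^2+p}\quad\text{and}\quad\delta_2\ge\frac{p-2c_2}{(1-\beta)p^2+p}.\] (Tit-for-Tat) $\frac{R}{1-\delta_i}\ge T_i+\delta_iS+\frac{\delta_i^2}{1-\delta_i}R$ for both $i=1,2$ if and only if \[\delta_1\ge\frac{p-2c_1}{p}\quad\text{and}\quad\delta_2\ge\frac{p-2c_2}{p}.\]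
   Context: Model: two content providers in an infinitely repeated game choose each period to cooperate or attack (ranking manipulation). Each attack succeeds with probability $p$; player $i$ pays cost $c_i$ per attack; $\beta$ is the market degradation factor when both attacks succeed; $\delta_i$ is player $i$'s discount factor. $R,T_i,S,Q_i$ are the stage payoffs for mutual cooperation, lone attack, being attacked while cooperating, and mutual attack. Cooperation is sustainable when each player weakly prefers perpetual cooperation to deviating under the trigger strategy (grim trigger: permanent mutual defection after a deviation; Tit-for-Tat: one round of retaliation then cooperation). *)

theory Defs
  imports Complex_Main
begin

definition payR :: real where "payR = 1/2"
definition payS :: "real \<Rightarrow> real" where "payS p = (1 - p) * (1/2)"
definition payT :: "real \<Rightarrow> real \<Rightarrow> real" where
  "payT p c = p + (1 - p) * (1/2) - c"
definition payQ :: "real \<Rightarrow> real \<Rightarrow> real \<Rightarrow> real" where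
  "payQ p \<beta> c = p^2 * (1/2) * \<beta> + p * (1 - p) + (1 - p)^2 * (1/2) - c"

definition grim_ok :: "real \<Rightarrow> real \<Rightarrow> real \<Rightarrow> real \<Rightarrow> bool" where
  "grim_ok p \<beta> c d \<longleftrightarrow> payR / (1 - d) \<ge> payT p c + d * payQ p \<beta> c / (1 - d)"

definition tft_ok :: "real \<Rightarrow> real \<Rightarrow> real \<Rightarrow> bool" where
  "tft_ok p c d \<longleftrightarrow> payR / (1 - d) \<ge> payT p c + d * payS p + d^2 / (1 - d) * payR"

end

theory Submission
  imports Defs
begin

lemma mulx:
  fixes a b x :: real
  assumes "0 < x"
  shows "a / x \<ge> b \<longleftrightarrow> a \<ge> x * b"
  using assms by (simp add: le_divide_eq mult.commute)

lemma helpx: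
  fixes x h a b :: real
  assumes "x - h = (a - b) / 2" shows "(x \<le> h) = (a \<le> b)"
  using assms by auto

lemma helpy:
  fixes x h a b :: real
  assumes "x = h + (a - b) / 2" shows "(x \<le> h) = (a \<le> b)"
  using assms by auto

lemma divx:
  fixes a b x :: real
  assumes "0 < x"
  shows "b / x \<le> a / x \<longleftrightarrow> b \<le> a"
  using assms by (simp add: divide_le_cancel)

lemma grim1:
  fixes p \<beta> c d :: real
  assumes "0 < p" "\<beta> < 1" "0 < d" "d < 1"
  shows "grim_ok p \<beta> c d \<longleftrightarrow> d \<ge> (p - 2*c) / ((1 - \<beta>) * p^2 + p)"
proof -
  have dp: "(1 - \<beta>) * p^2 + p > 0" using assms by (simp add: add_pos_pos)
  have "grim_ok p \<beta> c d \<longleftrightarrow> 1/2 \<ge> (1-d) * payT p c + d * payQ p \<beta> c"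
  proof -
    have "payT p c + d * payQ p \<beta> c / (1 - d) = ((1-d) * payT p c + d * payQ p \<beta> c) / (1-d)"
      using assms by (simp add: field_simps)
    thus ?thesis unfolding grim_ok_def payR_def using assms
      by (simp only: divx)
  qed
  also have "\<dots> \<longleftrightarrow> p - 2*c \<le> d * ((1 - \<beta>) * p^2 + p)"
  proof -
    have "(1-d) * payT p c + d * payQ p \<beta> c = 1/2 + ((p - 2*c) - d * ((1 - \<beta>) * p^2 + p))/2"
      unfolding payT_def payQ_def by (simp add: field_simps power2_eq_square)
    thus ?thesis by (rule helpy)
  qed
  also have "\<dots> \<longleftrightarrow> d \<ge> (p - 2*c) / ((1 - \<beta>) * p^2 + p)"
    using dp by (simp add: divide_le_eq mult.commute)
  finally show ?thesis .
qed

lemma tft1: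
  fixes p c d :: real
  assumes "0 < p" "0 < d" "d < 1"
  shows "tft_ok p c d \<longleftrightarrow> d \<ge> (p - 2*c) / p"
proof -
  have "tft_ok p c d \<longleftrightarrow> 1/2 \<ge> (1-d) * (payT p c + d * payS p) + d^2 * (1/2)"
  proof -
    have "payT p c + d * payS p + d^2 / (1 - d) * (1/2) = ((1-d) * (payT p c + d * payS p) + d^2 * (1/2)) / (1-d)"
      using assms by (simp add: field_simps)
    thus ?thesis unfolding tft_ok_def payR_def using assms
      by (simp only: divx)
  qed
  also have "\<dots> \<longleftrightarrow> (1-d) * (p - 2*c) \<le> (1-d) * (d * p)"
  proof -
    have "(1-d) * (payT p c + d * payS p) + d^2 * (1/2) - 1/2 = ((1-d) * (p - 2*c) - (1-d) * (d * p))/2"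
      unfolding payT_def payS_def by (simp add: field_simps power2_eq_square)
    thus ?thesis by (rule helpx)
  qed
  also have "\<dots> \<longleftrightarrow> p - 2*c \<le> d * p"
    using assms by simp
  also have "\<dots> \<longleftrightarrow> d \<ge> (p - 2*c) / p"
    using assms by (simp add: divide_le_eq)
  finally show ?thesis .
qed

theorem theorem8:
  fixes p \<beta> c1 c2 d1 d2 :: real
  assumes "0 < p" "p \<le> 1" "0 \<le> c1" "0 \<le> c2" "\<beta> < 1"
    "0 < d1" "d1 < 1" "0 < d2" "d2 < 1"
  shows "(grim_ok p \<beta> c1 d1 \<and> grim_ok p \<beta> c2 d2 \<longleftrightarrow>
           d1 \<ge> (p - 2*c1) / ((1 - \<beta>) * p^2 + p) \<and> d2 \<ge> (p - 2*c2) / ((1 - \<beta>) * p^2 + p))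
       \<and> (tft_ok p c1 d1 \<and> tft_ok p c2 d2 \<longleftrightarrow>
           d1 \<ge> (p - 2*c1) / p \<and> d2 \<ge> (p - 2*c2) / p)"
  using grim1[of p \<beta> d1 c1] grim1[of p \<beta> d2 c2] tft1[of p d1 c1] tft1[of p d2 c2] assms
  by blast

end
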